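(* Consider a fair allocation instance with agents $a_1,\dots,a_n$, a set $M$ of $m$ goods, binary XOS valuations $v_i$ accessed through a value oracle answering $v_i(S)$ in $O(1)$ time, and entitlements $b_i>0$. Consider the following algorithm. Initialize $s_i=\lfloor b_i m\rfloor$ for all $i$. Repeat: sort the agents so that $\frac{\lceil s_1/2\rceil}{b_1}\le\cdots\le\frac{\lceil s_n/2\rceil}{b_n}$; set $R\gets M$; for $i=1,\dots,n$ in this order, if $v_i(R)\ge\lceil s_i/2\rceil$ then give $a_i$ a bundle $A_i\subseteq R$ with $v_i(A_i)=|A_i|=\lceil s_i/2\rceil$ (computed by extracting a non-wasteful subset, which can be done in $O(m)$ time) and set $R\gets R\setminus A_i$; otherwise set $s_i\gets s_i-1$ and start the next repetition. If all $n$ agents received bundles, allocate $R$ arbitrarily and return the allocation. This algorithm runs in time $O(mn(m+\log n))$.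
   Context: A valuation $v:2^M\to\mathbb{R}_{\ge0}$ is XOS if there is a finite collection of additive functions $\{\ell_t\}_t$ with nonnegative item values such that $v(S)=\max_t\ell_t(S)$. It has binary marginals if $v(\varnothing)=0$ and $v(S\cup\{g\})-v(S)\in\{0,1\}$ for all $S,g$; "binary XOS" means XOS with binary marginals. A set $S$ is non-wasteful for $v$ if $v(S)=|S|$. For a binary XOS $v$ and any set $T$, a non-wasteful subset $X\subseteq T$ with $|X|=k$ for any given $k\le v(T)$ can be computed in $O(m)$ time (this is taken as a primitive in the running-time accounting). *)

theory Defs
  imports Main "HOL.Transcendental"
begin

definition XOS :: "'g set \<Rightarrow> ('g set \<Rightarrow> real) \<Rightarrow> bool" where
  "XOS M v \<longleftrightarrow> (\<exists>L :: ('g \<Rightarrow> real) set. finite L \<and> L \<noteq> {} \<and>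
      (\<forall>l\<in>L. \<forall>g\<in>M. l g \<ge> 0) \<and>
      (\<forall>S. S \<subseteq> M \<longrightarrow> v S = Max ((\<lambda>l. \<Sum>g\<in>S. l g) ` L)))"

definition binary_marginals :: "'g set \<Rightarrow> ('g set \<Rightarrow> real) \<Rightarrow> bool" where
  "binary_marginals M v \<longleftrightarrow> v {} = 0 \<and>
      (\<forall>S g. S \<subseteq> M \<and> g \<in> M \<longrightarrow> v (insert g S) - v S \<in> {0, 1})"

definition binary_XOS :: "'g set \<Rightarrow> ('g set \<Rightarrow> real) \<Rightarrow> bool" where
  "binary_XOS M v \<longleftrightarrow> XOS M v \<and> binary_marginals M v"

definition half :: "int \<Rightarrow> int" where
  "half k = \<lceil>real_of_int k / 2\<rceil>"

definition sorted_order :: "nat \<Rightarrow> (nat \<Rightarrow> real) \<Rightarrow> (nat \<Rightarrow> int) \<Rightarrow> nat list \<Rightarrow> bool" where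
  "sorted_order n b s \<sigma> \<longleftrightarrow> distinct \<sigma> \<and> set \<sigma> = {..<n} \<and>
     sorted_wrt (\<lambda>i j. real_of_int (half (s i)) / b i \<le> real_of_int (half (s j)) / b j) \<sigma>"

definition sort_cost :: "nat \<Rightarrow> real" where
  "sort_cost n = real n * (ln (real n) + 1)"

datatype 'g round_outcome = All_Served "nat \<Rightarrow> 'g set" "'g set" | Failed nat

text \<open>Cost: 1 per oracle query; for a served agent additionally |M| for extracting a non-wasteful
  subset (the O(m) primitive) and |M| for updating R.\<close>
inductive round_exec :: "'g set \<Rightarrow> (nat \<Rightarrow> 'g set \<Rightarrow> real) \<Rightarrow> (nat \<Rightarrow> int) \<Rightarrow> nat list
    \<Rightarrow> 'g set \<Rightarrow> (nat \<Rightarrow> 'g set) \<Rightarrow> 'g round_outcome \<Rightarrow> real \<Rightarrow> bool"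
  for M v s where
  round_nil: "round_exec M v s [] R A (All_Served A R) 0"
| round_serve: "\<lbrakk> v i R \<ge> real_of_int (half (s i)); A' \<subseteq> R;
      v i A' = real (card A'); int (card A') = half (s i);
      round_exec M v s \<sigma> (R - A') (A(i := A')) out c \<rbrakk>
    \<Longrightarrow> round_exec M v s (i # \<sigma>) R A out (c + 1 + 2 * real (card M))"
| round_fail: "\<not> v i R \<ge> real_of_int (half (s i))
    \<Longrightarrow> round_exec M v s (i # \<sigma>) R A (Failed i) 1"

datatype 'g config = Running "nat \<Rightarrow> int" | Done "nat \<Rightarrow> 'g set"

text \<open>One repetition of the outer loop, with its cost. After success, R is allocated
  arbitrarily (cost |M|).\<close>
inductive alg_step :: "'g set \<Rightarrow> (nat \<Rightarrow> 'g set \<Rightarrow> real) \<Rightarrow> (nat \<Rightarrow> real) \<Rightarrow> nat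
    \<Rightarrow> 'g config \<Rightarrow> 'g config \<Rightarrow> real \<Rightarrow> bool"
  for M v b n where
  step_fail: "\<lbrakk> sorted_order n b s \<sigma>; round_exec M v s \<sigma> M (\<lambda>_. {}) (Failed i) c \<rbrakk>
    \<Longrightarrow> alg_step M v b n (Running s) (Running (s(i := s i - 1))) (sort_cost n + c)"
| step_done: "\<lbrakk> sorted_order n b s \<sigma>; round_exec M v s \<sigma> M (\<lambda>_. {}) (All_Served A R) c;
      f ` R \<subseteq> {..<n} \<rbrakk>
    \<Longrightarrow> alg_step M v b n (Running s) (Done (\<lambda>i. A i \<union> {g\<in>R. f g = i}))
          (sort_cost n + c + real (card M))"

inductive alg_exec :: "'g set \<Rightarrow> (nat \<Rightarrow> 'g set \<Rightarrow> real) \<Rightarrow> (nat \<Rightarrow> real) \<Rightarrow> nat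
    \<Rightarrow> 'g config \<Rightarrow> real \<Rightarrow> bool"
  for M v b n where
  exec_init: "alg_exec M v b n (Running (\<lambda>i. \<lfloor>b i * real (card M)\<rfloor>)) 0"
| exec_step: "\<lbrakk> alg_exec M v b n cfg c; alg_step M v b n cfg cfg' d \<rbrakk>
    \<Longrightarrow> alg_exec M v b n cfg' (c + d)"

end

theory Submission
  imports Defs
begin

lemma bm_bounds:
  assumes bm: "binary_marginals M v" and fin: "finite T" and sub: "T \<subseteq> M"
  shows "0 \<le> v T \<and> v T \<le> real (card T)"
  using fin sub
proof (induction T rule: finite_induct)
  case empty
  then show ?case using bm by (simp add: binary_marginals_def)
next
  case (insert x F)
  have "v (insert x F) - v F \<in> {0, 1}" using bm insert.prems
    by (simp add: binary_marginals_def)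
  then show ?case using insert by auto
qed

lemma bm_remove:
  assumes bm: "binary_marginals M v" and sub: "T \<subseteq> M" and g: "g \<in> T"
  shows "v T - v (T - {g}) \<in> {0, 1}"
proof -
  have "insert g (T - {g}) = T" using g by auto
  moreover have "v (insert g (T - {g})) - v (T - {g}) \<in> {0, 1}" using bm sub g
    unfolding binary_marginals_def by (metis Diff_subset subset_trans subsetD)
  ultimately show ?thesis by auto
qed

lemma xos_claim:
  assumes bx: "binary_XOS M v" and fin: "finite T" and sub: "T \<subseteq> M"
    and lt: "v T < real (card T)"
  shows "\<exists>g\<in>T. v (T - {g}) \<ge> v T"
proof (rule ccontr)
  assume H: "\<not> ?thesis"
  have bm: "binary_marginals M v" using bx by (simp add: binary_XOS_def)
  obtain L :: "('a \<Rightarrow> real) set" where L: "finite L" "L \<noteq> {}"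
    "\<forall>l\<in>L. \<forall>g\<in>M. l g \<ge> 0"
    "\<forall>S. S \<subseteq> M \<longrightarrow> v S = Max ((\<lambda>l. \<Sum>g\<in>S. l g) ` L)"
    using bx unfolding binary_XOS_def XOS_def by blast
  have "Max ((\<lambda>l. \<Sum>g\<in>T. l g) ` L) \<in> (\<lambda>l. \<Sum>g\<in>T. l g) ` L"
    using L by (intro Max_in) auto
  then obtain l where l: "l \<in> L" "v T = (\<Sum>g\<in>T. l g)" using L(4) sub by auto
  have "l g \<ge> 1" if g: "g \<in> T" for g
  proof -
    have "v (T - {g}) = v T - 1" using H bm_remove[OF bm sub g] g by force
    moreover have "v (T - {g}) \<ge> (\<Sum>h\<in>T - {g}. l h)"
    proof -
      have "v (T - {g}) = Max ((\<lambda>l. \<Sum>g\<in>T - {g}. l g) ` L)" using L(4) sub by (meson Diff_subset subset_trans)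
      moreover have "(\<Sum>h\<in>T - {g}. l h) \<le> Max ((\<lambda>l. \<Sum>g\<in>T - {g}. l g) ` L)"
        using L(1) l(1) by (intro Max_ge) auto
      ultimately show ?thesis by simp
    qed
    moreover have "(\<Sum>h\<in>T - {g}. l h) = (\<Sum>h\<in>T. l h) - l g"
      using fin g by (simp add: sum_diff1)
    ultimately show ?thesis using l(2) by linarith
  qed
  then have "(\<Sum>g\<in>T. (1::real)) \<le> (\<Sum>g\<in>T. l g)" by (intro sum_mono) auto
  then show False using l(2) lt by simp
qed

lemma nonwasteful:
  assumes bx: "binary_XOS M v"
  shows "finite T \<Longrightarrow> T \<subseteq> M \<Longrightarrow> real k \<le> v T \<Longrightarrow> \<exists>X\<subseteq>T. card X = k \<and> v X = real k"
proof (induction "card T" arbitrary: T)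
  case 0
  then have "T = {}" by simp
  moreover have "v {} = 0" using bx by (simp add: binary_XOS_def binary_marginals_def)
  ultimately show ?case using 0 by auto
next
  case (Suc x)
  have bm: "binary_marginals M v" using bx by (simp add: binary_XOS_def)
  have ub: "v T \<le> real (card T)" using bm_bounds[OF bm Suc.prems(1,2)] by simp
  show ?case
  proof (cases "k = card T")
    case True
    then show ?thesis using ub Suc.prems by (intro exI[of _ T]) auto
  next
    case False
    then have kl: "k < card T" using ub Suc.prems(3) by linarith
    have "\<exists>g\<in>T. real k \<le> v (T - {g})"
    proof (cases "v T < real (card T)")
      case True
      then show ?thesis using xos_claim[OF bx Suc.prems(1,2)] Suc.prems(3) by force
    next
      case False
      obtain g where g: "g \<in> T" using kl by fastforce
      have "v (T - {g}) \<ge> v T - 1" using bm_remove[OF bm Suc.prems(2) g] by auto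
      then show ?thesis using g False kl by (intro bexI[of _ g]) auto
    qed
    then obtain g where g: "g \<in> T" "real k \<le> v (T - {g})" by blast
    have "x = card (T - {g})" using Suc.hyps(2) g Suc.prems(1) by simp
    then obtain X where "X \<subseteq> T - {g}" "card X = k" "v X = real k"
      using Suc.hyps(1) Suc.prems g by blast
    then show ?thesis by blast
  qed
qed


lemma half_nonneg: "0 \<le> k \<Longrightarrow> 0 \<le> half k"
  unfolding half_def by simp

lemma half_pos: "0 < half k \<Longrightarrow> 1 \<le> k"
  unfolding half_def by (simp add: zero_less_ceiling)

lemma round_props:
  assumes "round_exec M v s \<sigma> R A out c"
  shows "R \<subseteq> M \<Longrightarrow> c \<le> real (length \<sigma>) * (1 + 2 * real (card M)) \<and>
    (\<forall>i. out = Failed i \<longrightarrow> i \<in> set \<sigma> \<and> (\<exists>R'\<subseteq>M. v i R' < real_of_int (half (s i))))"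
  using assms
proof (induction rule: round_exec.induct)
  case (round_nil R A)
  then show ?case by simp
next
  case (round_serve i R A' \<sigma> A out c)
  have "R - A' \<subseteq> M" using round_serve.prems by auto
  then show ?case using round_serve.IH by (auto simp: algebra_simps)
next
  case (round_fail i R \<sigma> A)
  have "1 * 1 \<le> (1 + real (length \<sigma>)) * (1 + 2 * real (card M))"
    by (intro mult_mono) auto
  then show ?case using round_fail by auto
qed

lemma round_exists:
  assumes bx: "\<forall>i<n. binary_XOS M (v i)" and fin: "finite M"
    and sn: "\<forall>i<n. 0 \<le> s i"
  shows "set \<sigma> \<subseteq> {..<n} \<Longrightarrow> R \<subseteq> M \<Longrightarrow> \<exists>out c. round_exec M v s \<sigma> R A out c"
proof (induction \<sigma> arbitrary: R A)
  case Nil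
  then show ?case by (blast intro: round_nil)
next
  case (Cons i \<sigma>)
  have i: "i < n" using Cons.prems by auto
  show ?case
  proof (cases "v i R \<ge> real_of_int (half (s i))")
    case True
    have h0: "0 \<le> half (s i)" using half_nonneg sn i by blast
    have fR: "finite R" using Cons.prems fin finite_subset by blast
    have "real (nat (half (s i))) \<le> v i R" using True h0 by simp
    then obtain X where X: "X \<subseteq> R" "card X = nat (half (s i))" "v i X = real (nat (half (s i)))"
      using nonwasteful[OF bx[rule_format, OF i] fR Cons.prems(2)] by blast
    obtain out c where "round_exec M v s \<sigma> (R - X) (A(i := X)) out c"
      using Cons.IH Cons.prems by (meson Diff_subset set_subset_Cons subset_trans)
    moreover have "v i X = real (card X)" "int (card X) = half (s i)" using X h0 by auto
    ultimately show ?thesis using True X(1) by (blast intro: round_serve)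
  next
    case False
    then show ?thesis by (blast intro: round_fail)
  qed
qed

lemma sorted_exists: "\<exists>\<sigma>. sorted_order n b s \<sigma>"
proof -
  let ?f = "\<lambda>i. real_of_int (half (s i)) / b i"
  let ?\<sigma> = "sort_key ?f [0..<n]"
  have "sorted (map ?f ?\<sigma>)" by (rule sorted_sort_key)
  then have "sorted_wrt (\<lambda>i j. ?f i \<le> ?f j) ?\<sigma>"
    by (simp add: sorted_map)
  then show ?thesis unfolding sorted_order_def
    by (intro exI[of _ ?\<sigma>]) (auto simp: distinct_sort)
qed


lemma sum_upd_int:
  fixes s :: "nat \<Rightarrow> int"
  assumes "i < n"
  shows "(\<Sum>j<n. (s(i := x)) j) = (\<Sum>j<n. s j) - s i + x"
proof -
  have "(\<Sum>j<n. (s(i := x)) j) = (s(i := x)) i + (\<Sum>j\<in>{..<n} - {i}. (s(i := x)) j)"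
    using assms by (subst sum.remove[of _ i]) auto
  also have "(\<Sum>j\<in>{..<n} - {i}. (s(i := x)) j) = (\<Sum>j\<in>{..<n} - {i}. s j)"
    by (intro sum.cong) auto
  also have "(\<Sum>j\<in>{..<n} - {i}. s j) = (\<Sum>j<n. s j) - s i"
    using assms by (simp add: sum_diff1)
  finally show ?thesis by simp
qed

definition Kc :: "nat \<Rightarrow> nat \<Rightarrow> real" where
  "Kc n m = sort_cost n + real n * (1 + 2 * real m) + real m"

lemma Kc_nonneg: "1 \<le> n \<Longrightarrow> 0 \<le> Kc n m"
  unfolding Kc_def sort_cost_def by simp

lemma aux_step: "(x::real) \<le> K * (m - S) + K \<Longrightarrow> S' = S - 1 \<Longrightarrow> x \<le> K * (m - S')"
proof -
  assume a: "x \<le> K * (m - S) + K" "S' = S - 1"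
  have "K * (m - S') = K * (m - S) + K" using a(2) by (simp add: right_diff_distrib)
  then show ?thesis using a(1) by simp
qed

lemma invariant:
  assumes ex: "alg_exec M v b n cfg c"
    and fin: "finite M" and n1: "1 \<le> n" and bx: "\<forall>i<n. binary_XOS M (v i)"
    and bpos: "\<forall>i<n. b i > 0" and bsum: "(\<Sum>i<n. b i) = 1"
  shows "case cfg of Running s \<Rightarrow> (\<forall>i<n. 0 \<le> s i) \<and>
            c \<le> Kc n (card M) * (real (card M) - real_of_int (\<Sum>i<n. s i))
          | Done A \<Rightarrow> c \<le> Kc n (card M) * (real (card M) + 1)"
  using ex
proof (induction rule: alg_exec.induct)
  case exec_init
  have "real_of_int (\<Sum>i<n. \<lfloor>b i * real (card M)\<rfloor>) = (\<Sum>i<n. real_of_int \<lfloor>b i * real (card M)\<rfloor>)"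
    by simp
  also have "\<dots> \<le> (\<Sum>i<n. b i * real (card M))" by (intro sum_mono) simp
  also have "\<dots> = real (card M)" using bsum by (simp add: sum_distrib_right[symmetric])
  finally have "0 \<le> Kc n (card M) * (real (card M) - real_of_int (\<Sum>i<n. \<lfloor>b i * real (card M)\<rfloor>))"
    using Kc_nonneg[OF n1] by simp
  moreover have "\<forall>i<n. 0 \<le> \<lfloor>b i * real (card M)\<rfloor>" using bpos by (simp add: less_imp_le)
  ultimately show ?case by simp
next
  case (exec_step cfg c cfg' d)
  from exec_step.hyps(2) show ?case
  proof cases
    case (step_fail s \<sigma> i c')
    note IH = exec_step.IH[unfolded step_fail(1) config.case]
    have dl: "length \<sigma> = n" using step_fail(4) unfolding sorted_order_def
      by (metis card_lessThan distinct_card)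
    from round_props[OF step_fail(5)] obtain R' where
      c': "c' \<le> real n * (1 + 2 * real (card M))" and i: "i \<in> set \<sigma>"
      and R': "R' \<subseteq> M" "v i R' < real_of_int (half (s i))"
      using dl by auto
    have "i < n" using i step_fail(4) unfolding sorted_order_def by auto
    have "0 \<le> v i R'" using bm_bounds[of M "v i" R'] bx \<open>i < n\<close> R'(1) fin
      by (auto simp: binary_XOS_def intro: finite_subset)
    then have "1 \<le> s i" using R'(2) half_pos by fastforce
    have sum': "(\<Sum>j<n. (s(i := s i - 1)) j) = (\<Sum>j<n. s j) - 1"
      using sum_upd_int[OF \<open>i < n\<close>] by simp
    have "c + d \<le> Kc n (card M) * (real (card M) - real_of_int (\<Sum>i<n. s i)) + Kc n (card M)"
      using IH c' step_fail(3) unfolding Kc_def by linarith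
    moreover have "real_of_int (\<Sum>j<n. (s(i := s i - 1)) j) = real_of_int (\<Sum>j<n. s j) - 1"
      using sum' by simp
    ultimately have "c + d \<le> Kc n (card M) * (real (card M) - real_of_int (\<Sum>j<n. (s(i := s i - 1)) j))"
      by (rule aux_step)
    moreover have "\<forall>j<n. 0 \<le> (s(i := s i - 1)) j" using IH \<open>1 \<le> s i\<close> by auto
    ultimately show ?thesis using step_fail(2) by simp
  next
    case (step_done s \<sigma> A R c' f)
    note IH = exec_step.IH[unfolded step_done(1) config.case]
    have dl: "length \<sigma> = n" using step_done(4) unfolding sorted_order_def
      by (metis card_lessThan distinct_card)
    have c': "c' \<le> real n * (1 + 2 * real (card M))"
      using round_props[OF step_done(5)] dl by auto
    have "0 \<le> real_of_int (\<Sum>i<n. s i)" using IH by (simp add: sum_nonneg del: of_int_sum) (meson lessThan_iff sum_nonneg)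
    then have "Kc n (card M) * (real (card M) - real_of_int (\<Sum>i<n. s i)) \<le> Kc n (card M) * real (card M)"
      using Kc_nonneg[OF n1] by (intro mult_left_mono) auto
    then have "c + d \<le> Kc n (card M) * real (card M) + Kc n (card M)"
      using IH c' step_done(3) unfolding Kc_def by linarith
    then show ?thesis using step_done(2) by (simp add: algebra_simps)
  qed
qed


lemma final_bound:
  fixes m n :: nat
  assumes "1 \<le> m" "1 \<le> n"
  shows "Kc n m * (real m + 1) \<le> 10 * real m * real n * (real m + ln (real n))"
proof -
  have ln0: "0 \<le> ln (real n)" using assms by simp
  have m1: "1 \<le> real m" and n1: "1 \<le> real n" using assms by auto
  have "Kc n m \<le> real n * ln (real n) + 5 * real n * real m"
  proof -
    have "real n \<le> real n * real m" using m1 n1 by simp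
    moreover have "real m \<le> real n * real m" using m1 n1 by simp
    ultimately show ?thesis unfolding Kc_def sort_cost_def by (simp add: algebra_simps)
  qed
  moreover have "real m + 1 \<le> 2 * real m" using m1 by simp
  moreover have "0 \<le> Kc n m" using Kc_nonneg assms by simp
  ultimately have "Kc n m * (real m + 1) \<le> (real n * ln (real n) + 5 * real n * real m) * (2 * real m)"
    by (intro mult_mono) (auto simp: ln0)
  also have "\<dots> = 2 * real m * real n * ln (real n) + 10 * real m * real n * real m"
    by (simp add: algebra_simps)
  also have "\<dots> \<le> 10 * real m * real n * ln (real n) + 10 * real m * real n * real m"
    using ln0 m1 n1 by (intro add_mono mult_right_mono) auto
  also have "\<dots> = 10 * real m * real n * (real m + ln (real n))"
    by (simp add: algebra_simps)
  finally show ?thesis .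
qed

theorem lemma2:
  shows "\<exists>C::real. \<forall>(M::'g set) (n::nat) (v::nat \<Rightarrow> 'g set \<Rightarrow> real) (b::nat \<Rightarrow> real).
    finite M \<and> card M \<ge> 1 \<and> n \<ge> 1 \<and> (\<forall>i<n. binary_XOS M (v i)) \<and>
    (\<forall>i<n. b i > 0) \<and> (\<Sum>i<n. b i) = 1 \<longrightarrow>
    (\<forall>cfg c. alg_exec M v b n cfg c \<longrightarrow>
       c \<le> C * real (card M) * real n * (real (card M) + ln (real n)) \<and>
       ((\<exists>A. cfg = Done A) \<or> (\<exists>cfg' d. alg_step M v b n cfg cfg' d)))"
proof (intro exI[of _ 10] allI impI)
  fix M :: "'g set" and n v b cfg c
  assume H: "finite M \<and> card M \<ge> 1 \<and> n \<ge> 1 \<and> (\<forall>i<n. binary_XOS M (v i)) \<and>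
    (\<forall>i<n. b i > 0) \<and> (\<Sum>i<n. b i) = 1"
    and ex: "alg_exec M v b n cfg c"
  then have fin: "finite M" and m1: "1 \<le> card M" and n1: "1 \<le> n"
    and bx: "\<forall>i<n. binary_XOS M (v i)" and bpos: "\<forall>i<n. b i > 0"
    and bsum: "(\<Sum>i<n. b i) = 1" by auto
  note inv = invariant[OF ex fin n1 bx bpos bsum]
  have K0: "0 \<le> Kc n (card M)" using Kc_nonneg n1 by simp
  have cb: "c \<le> Kc n (card M) * (real (card M) + 1)"
  proof (cases cfg)
    case (Running s)
    then have I: "\<forall>i<n. 0 \<le> s i"
      "c \<le> Kc n (card M) * (real (card M) - real_of_int (\<Sum>i<n. s i))"
      using inv by auto
    have "0 \<le> (\<Sum>i<n. s i)" using I(1) by (meson lessThan_iff sum_nonneg)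
    then have "0 \<le> real_of_int (\<Sum>i<n. s i)" by (simp only: of_int_0_le_iff)
    then have "Kc n (card M) * (real (card M) - real_of_int (\<Sum>i<n. s i))
        \<le> Kc n (card M) * (real (card M) + 1)"
      using K0 by (intro mult_left_mono) (auto simp del: of_int_sum)
    then show ?thesis using I(2) by linarith
  next
    case (Done A)
    then show ?thesis using inv by auto
  qed
  have "c \<le> 10 * real (card M) * real n * (real (card M) + ln (real n))"
    using cb final_bound[OF m1 n1] by linarith
  moreover have "(\<exists>A. cfg = Done A) \<or> (\<exists>cfg' d. alg_step M v b n cfg cfg' d)"
  proof (cases cfg)
    case (Running s)
    then have sn: "\<forall>i<n. 0 \<le> s i" using inv by auto
    obtain \<sigma> where \<sigma>: "sorted_order n b s \<sigma>" using sorted_exists by blast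
    have "set \<sigma> \<subseteq> {..<n}" using \<sigma> unfolding sorted_order_def by simp
    then obtain out c' where r: "round_exec M v s \<sigma> M (\<lambda>_. {}) out c'"
      using round_exists[OF bx fin sn] by blast
    show ?thesis
    proof (cases out)
      case (All_Served A R)
      have "(\<lambda>_. 0::nat) ` R \<subseteq> {..<n}" using n1 by auto
      then show ?thesis using Running \<sigma> r All_Served by (blast intro: step_done)
    next
      case (Failed i)
      then show ?thesis using Running \<sigma> r by (blast intro: step_fail)
    qed
  next
    case (Done A)
    then show ?thesis by blast
  qed
  ultimately show "c \<le> 10 * real (card M) * real n * (real (card M) + ln (real n)) \<and>
       ((\<exists>A. cfg = Done A) \<or> (\<exists>cfg' d. alg_step M v b n cfg cfg' d))" by blast
qed

end
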